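(* Let $n>1$ and $k\ge1$. Let $\mathcal{B}$ be a special $n$-Brinkhuis $k$-triple, and suppose some word of $\mathcal{B}^{(0)}$ begins with the letters $01$. Then $n\ge 13$, and exactly one of the following alternatives holds: <ul> <li>every word in $\mathcal{B}^{(0)}$ begins with $012021$ and ends with $120210$;</li> <li>every word in $\mathcal{B}^{(0)}$ begins with $012102$ and ends with $201210$.</li> </ul>
   Context: Let $\Sigma=\{0,1,2\}$. A word over $\Sigma$ is square-free if it cannot be written as $xyyz$ with $y$ nonempty. $\mathcal{A}(n)$ is the set of square-free words of length $n$. For a word $w$, $\bar w$ denotes its reversal. $\tau$ is the letter permutation $0\mapsto1$, $1\mapsto2$, $2\mapsto0$, applied letterwise to words and elementwise to sets of words. An $n$-Brinkhuis $(k_0,k_1,k_2)$-triple consists of sets $\mathcal{B}^{(i)}\subset\mathcal{A}(n)$, $i\in\{0,1,2\}$, where $\mathcal{B}^{(i)}$ has $k_i\ge1$ distinct words. The defining condition: for every square-free word $ii'i''\in\mathcal{A}(3)$ and all $u\in\mathcal{B}^{(i)}$, $v\in\mathcal{B}^{(i')}$, $x\in\mathcal{B}^{(i'')}$, the concatenation $uvx$ is square-free. A special $n$-Brinkhuis $k$-triple is an $n$-Brinkhuis $(k,k,k)$-triple satisfying two further conditions: <ul> <li>$\mathcal{B}^{(1)}=\tau(\mathcal{B}^{(0)})$ and $\mathcal{B}^{(2)}=\tau^2(\mathcal{B}^{(0)})$;</li> <li>$w\in\mathcal{B}^{(0)}$ implies $\bar w\in\mathcal{B}^{(0)}$.</li>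 </ul> *)

theory Defs
  imports Main
begin

definition word3 :: "nat list \<Rightarrow> bool" where
  "word3 w \<longleftrightarrow> set w \<subseteq> {0,1,2}"

definition square_free :: "nat list \<Rightarrow> bool" where
  "square_free w \<longleftrightarrow> \<not> (\<exists>x y z. y \<noteq> [] \<and> w = x @ y @ y @ z)"

definition sqf_words :: "nat \<Rightarrow> nat list set" where
  "sqf_words n = {w. word3 w \<and> length w = n \<and> square_free w}"

definition tau_letter :: "nat \<Rightarrow> nat" where
  "tau_letter a = (a + 1) mod 3"

definition tau :: "nat list \<Rightarrow> nat list" where
  "tau w = map tau_letter w"

definition brinkhuis_triple ::
  "nat \<Rightarrow> (nat \<Rightarrow> nat list set) \<Rightarrow> nat \<Rightarrow> nat \<Rightarrow> nat \<Rightarrow> bool" where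
  "brinkhuis_triple n B k0 k1 k2 \<longleftrightarrow>
     (\<forall>i\<in>{0,1,2}. B i \<subseteq> sqf_words n) \<and>
     finite (B 0) \<and> finite (B 1) \<and> finite (B 2) \<and>
     card (B 0) = k0 \<and> card (B 1) = k1 \<and> card (B 2) = k2 \<and>
     k0 \<ge> 1 \<and> k1 \<ge> 1 \<and> k2 \<ge> 1 \<and>
     (\<forall>i i' i''. [i, i', i''] \<in> sqf_words 3 \<longrightarrow>
        (\<forall>u\<in>B i. \<forall>v\<in>B i'. \<forall>x\<in>B i''. square_free (u @ v @ x)))"

definition special_brinkhuis_triple ::
  "nat \<Rightarrow> (nat \<Rightarrow> nat list set) \<Rightarrow> nat \<Rightarrow> bool" where
  "special_brinkhuis_triple n B k \<longleftrightarrow>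
     brinkhuis_triple n B k k k \<and>
     B 1 = tau ` B 0 \<and> B 2 = (tau \<circ> tau) ` B 0 \<and>
     (\<forall>w\<in>B 0. rev w \<in> B 0)"

end

theory Submission
  imports Defs
begin

definition sqpre :: "nat list \<Rightarrow> bool" where
  "sqpre v \<longleftrightarrow> (\<exists>y z. y \<noteq> [] \<and> v = y @ y @ z)"

fun pref :: "nat list \<Rightarrow> nat list \<Rightarrow> bool" where
  "pref [] ys = True"
| "pref (x#xs) [] = False"
| "pref (x#xs) (y#ys) = (x = y \<and> pref xs ys)"

lemma pref_iff: "pref xs ys \<longleftrightarrow> (\<exists>t. ys = xs @ t)"
  by (induction xs ys rule: pref.induct) auto

fun sqp :: "nat list \<Rightarrow> nat list \<Rightarrow> bool" where
  "sqp y [] = False"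
| "sqp y (c#r) = (pref (y@[c]) r \<or> sqp (y@[c]) r)"

lemma sqp_iff: "sqp y r \<longleftrightarrow> (\<exists>z w. z \<noteq> [] \<and> r = z @ w \<and> pref (y @ z) w)"
proof (induction r arbitrary: y)
  case Nil
  then show ?case by simp
next
  case (Cons c r)
  show ?case
  proof
    assume "sqp y (c # r)"
    then have "pref (y@[c]) r \<or> sqp (y@[c]) r" by simp
    then show "\<exists>z w. z \<noteq> [] \<and> c # r = z @ w \<and> pref (y @ z) w"
    proof
      assume "pref (y@[c]) r"
      then show ?thesis by (intro exI[of _ "[c]"] exI[of _ r]) simp
    next
      assume "sqp (y@[c]) r"
      then obtain z w where "z \<noteq> []" "r = z @ w" "pref ((y @ [c]) @ z) w"
        using Cons.IH by blast
      then show ?thesis by (intro exI[of _ "c#z"] exI[of _ w]) simp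
    qed
  next
    assume "\<exists>z w. z \<noteq> [] \<and> c # r = z @ w \<and> pref (y @ z) w"
    then obtain z w where zw: "z \<noteq> []" "c # r = z @ w" "pref (y @ z) w" by blast
    then obtain z' where z: "z = c # z'" "r = z' @ w" by (cases z) auto
    show "sqp y (c # r)"
    proof (cases "z' = []")
      case True
      then show ?thesis using zw z by simp
    next
      case False
      have "pref ((y @ [c]) @ z') w" using zw z by simp
      then have "sqp (y@[c]) r" using Cons.IH False z by blast
      then show ?thesis by simp
    qed
  qed
qed

lemma sqp_sqpre: "sqp [] v \<longleftrightarrow> sqpre v"
  unfolding sqp_iff pref_iff sqpre_def by auto

lemma square_free_Nil: "square_free []"
  unfolding square_free_def by auto

lemma square_free_Cons: "square_free (c # w) \<longleftrightarrow> square_free w \<and> \<not> sqpre (c # w)"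
proof
  assume a: "square_free (c # w)"
  have "square_free w"
    unfolding square_free_def
  proof
    assume "\<exists>x y z. y \<noteq> [] \<and> w = x @ y @ y @ z"
    then obtain x y z where "y \<noteq> []" "w = x @ y @ y @ z" by blast
    then have "c # w = (c # x) @ y @ y @ z" by simp
    with a \<open>y \<noteq> []\<close> show False unfolding square_free_def by blast
  qed
  moreover have "\<not> sqpre (c # w)"
  proof
    assume "sqpre (c # w)"
    then obtain y z where "y \<noteq> []" "c # w = [] @ y @ y @ z" unfolding sqpre_def by auto
    with a show False unfolding square_free_def by blast
  qed
  ultimately show "square_free w \<and> \<not> sqpre (c # w)" by blast
next
  assume a: "square_free w \<and> \<not> sqpre (c # w)"
  show "square_free (c # w)"
    unfolding square_free_def
  proof
    assume "\<exists>x y z. y \<noteq> [] \<and> c # w = x @ y @ y @ z"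
    then obtain x y z where xyz: "y \<noteq> []" "c # w = x @ y @ y @ z" by blast
    show False
    proof (cases x)
      case Nil
      with xyz a show False unfolding sqpre_def by auto
    next
      case (Cons d x')
      with xyz have "w = x' @ y @ y @ z" by simp
      with a xyz show False unfolding square_free_def by blast
    qed
  qed
qed

fun sqf2 :: "nat list \<Rightarrow> bool" where
  "sqf2 [] = True"
| "sqf2 (c # w) = (\<not> sqp [] (c # w) \<and> sqf2 w)"

lemma sqf2_correct: "sqf2 w = square_free w"
  by (induction w) (auto simp: square_free_Nil square_free_Cons sqp_sqpre simp del: sqp.simps)

lemma square_free_appendD:
  assumes "square_free (a @ b)"
  shows "square_free a" "square_free b"
proof -
  show "square_free a" unfolding square_free_def
  proof
    assume "\<exists>x y z. y \<noteq> [] \<and> a = x @ y @ y @ z"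
    then obtain x y z where "y \<noteq> []" "a = x @ y @ y @ z" by blast
    then have "a @ b = x @ y @ y @ (z @ b)" by simp
    with assms \<open>y \<noteq> []\<close> show False unfolding square_free_def by blast
  qed
  show "square_free b" unfolding square_free_def
  proof
    assume "\<exists>x y z. y \<noteq> [] \<and> b = x @ y @ y @ z"
    then obtain x y z where "y \<noteq> []" "b = x @ y @ y @ z" by blast
    then have "a @ b = (a @ x) @ y @ y @ z" by simp
    with assms \<open>y \<noteq> []\<close> show False unfolding square_free_def by blast
  qed
qed

definition ext :: "nat list list \<Rightarrow> nat list list" where
  "ext ws = concat (map (\<lambda>w. filter (\<lambda>v. \<not> sqp [] v) [0 # w, 1 # w, 2 # w]) ws)"

lemma ext_complete:
  "word3 u \<Longrightarrow> square_free (u @ b) \<Longrightarrow> b \<in> set bs \<Longrightarrow> u @ b \<in> set ((ext ^^ length u) bs)"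
proof (induction u)
  case Nil
  then show ?case by simp
next
  case (Cons c u)
  have sf: "square_free (c # (u @ b))" using Cons.prems(2) by simp
  then have h1: "square_free (u @ b)" and h2: "\<not> sqpre (c # (u @ b))"
    by (auto simp: square_free_Cons)
  have "word3 u" and c: "c = 0 \<or> c = 1 \<or> c = 2" using Cons.prems(1) by (auto simp: word3_def)
  with h1 have "u @ b \<in> set ((ext ^^ length u) bs)" using Cons.IH Cons.prems(3) by blast
  moreover have "\<not> sqp [] (c # (u @ b))" using h2 by (simp add: sqp_sqpre del: sqp.simps)
  ultimately show ?case using c unfolding ext_def by fastforce
qed

fun gen :: "nat \<Rightarrow> nat list list" where
  "gen 0 = [[]]"
| "gen (Suc n) = ext (gen n)"

lemma gen_eq: "gen n = (ext ^^ n) [[]]"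
  by (induction n) auto

fun genE :: "nat \<Rightarrow> nat list list" where
  "genE 0 = [[1,0]]"
| "genE (Suc n) = ext (genE n)"

lemma genE_eq: "genE n = (ext ^^ n) [[1,0]]"
  by (induction n) auto

definition t1 :: "nat \<Rightarrow> nat" where "t1 c = (if c = 0 then 1 else if c = 1 then 2 else 0)"
definition t2 :: "nat \<Rightarrow> nat" where "t2 c = (if c = 0 then 2 else if c = 1 then 0 else 1)"

lemma map_t1: "word3 u \<Longrightarrow> map t1 u = tau u"
  unfolding tau_def word3_def
  by (induction u) (auto simp: t1_def tau_letter_def)

lemma map_t2: "word3 u \<Longrightarrow> map t2 u = (tau \<circ> tau) u"
  unfolding tau_def word3_def
  by (induction u) (auto simp: t2_def tau_letter_def)

definition trips :: "(nat \<times> nat \<times> nat) list" where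
  "trips = [(0,1,0),(0,1,2),(0,2,0),(0,2,1),(1,0,1),(1,0,2),(1,2,0),(1,2,1),(2,0,1),(2,0,2),(2,1,0),(2,1,2)]"

definition Bl :: "nat list list \<Rightarrow> nat \<Rightarrow> nat list list" where
  "Bl S i = (if i = 0 then S else if i = 1 then map (map t1) S else map (map t2) S)"

definition okw :: "nat list \<Rightarrow> bool" where
  "okw w = (let S = [w, rev w] in
     list_all (\<lambda>(i,j,k). list_all (\<lambda>u. list_all (\<lambda>v. list_all (\<lambda>x. sqf2 (u @ v @ x))
        (Bl S k)) (Bl S j)) (Bl S i)) trips)"

lemma sc0: "list_all (\<lambda>w. \<not> okw w) (genE 0)"
  by code_simp

lemma sc1: "list_all (\<lambda>w. \<not> okw w) (genE 1)"
  by code_simp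

lemma sc2: "list_all (\<lambda>w. \<not> okw w) (genE 2)"
  by code_simp

lemma sc3: "list_all (\<lambda>w. \<not> okw w) (genE 3)"
  by code_simp

lemma sc4: "list_all (\<lambda>w. \<not> okw w) (genE 4)"
  by code_simp

lemma sc5: "list_all (\<lambda>w. \<not> okw w) (genE 5)"
  by code_simp

lemma sc6: "list_all (\<lambda>w. \<not> okw w) (genE 6)"
  by code_simp

lemma sc7: "list_all (\<lambda>w. \<not> okw w) (genE 7)"
  by code_simp

lemma sc8: "list_all (\<lambda>w. \<not> okw w) (genE 8)"
  by code_simp

lemma sc9: "list_all (\<lambda>w. \<not> okw w) (genE 9)"
  by code_simp

lemma sc10: "list_all (\<lambda>w. \<not> okw w) (genE 10)"
  by code_simp

lemma small_check:
  assumes "m \<le> 10"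
  shows "list_all (\<lambda>w. \<not> okw w) (genE m)"
proof -
  have "m = 0 \<or> m = 1 \<or> m = 2 \<or> m = 3 \<or> m = 4 \<or> m = 5 \<or> m = 6 \<or> m = 7 \<or> m = 8 \<or> m = 9 \<or> m = 10"
    using assms by presburger
  then show ?thesis using sc0 sc1 sc2 sc3 sc4 sc5 sc6 sc7 sc8 sc9 sc10 by auto
qed

definition okp :: "nat list \<Rightarrow> nat list \<Rightarrow> bool" where
  "okp s q = (sqf2 (s @ map t1 q) \<and> sqf2 (s @ map t2 q))"

definition pext :: "nat list \<Rightarrow> nat list list \<Rightarrow> nat list list" where
  "pext s ps = concat (map (\<lambda>q. filter (okp s) [q @ [0], q @ [1], q @ [2]]) ps)"

fun tree :: "nat list \<Rightarrow> nat \<Rightarrow> nat list list" where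
  "tree s 0 = [[]]"
| "tree s (Suc m) = pext s (tree s m)"

lemma tree_complete: "word3 q \<Longrightarrow> okp s q \<Longrightarrow> q \<in> set (tree s (length q))"
proof (induction q rule: rev_induct)
  case Nil
  then show ?case by simp
next
  case (snoc c q)
  have "square_free ((s @ map t1 q) @ [t1 c])" "square_free ((s @ map t2 q) @ [t2 c])"
    using snoc.prems(2) unfolding okp_def sqf2_correct by simp_all
  then have "okp s q" unfolding okp_def sqf2_correct using square_free_appendD(1) by blast
  moreover have "word3 q" and c: "c = 0 \<or> c = 1 \<or> c = 2" using snoc.prems(1) by (auto simp: word3_def)
  ultimately have "q \<in> set (tree s (length q))" using snoc.IH by blast
  moreover have "q @ [c] \<in> set (filter (okp s) [q @ [0], q @ [1], q @ [2]])"
    using c snoc.prems(2) by auto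
  ultimately have "q @ [c] \<in> set (pext s (tree s (length q)))"
    unfolding pext_def set_concat set_map by blast
  then show ?case by simp
qed

definition pr :: "nat list \<Rightarrow> nat list \<times> nat list" where
  "pr u = (take 6 u, drop (length u - 6) u)"

definition comp :: "nat list \<times> nat list \<Rightarrow> nat list \<times> nat list \<Rightarrow> bool" where
  "comp a b = okp (snd a) (fst b)"

definition A1 :: "nat list \<times> nat list" where "A1 = ([0,1,2,0,2,1],[1,2,0,2,1,0])"
definition A2 :: "nat list \<times> nat list" where "A2 = ([0,1,2,1,0,2],[2,0,1,2,1,0])"

definition V12 :: "(nat list \<times> nat list) list" where
  "V12 = [([0, 1, 2, 0, 2, 1], [1, 2, 0, 2, 1, 0]), ([0, 1, 2, 1, 0, 2], [2, 0, 1, 2, 1, 0]), ([0, 2, 1, 0, 1, 2], [2, 1, 0, 1, 2, 0]), ([0, 2, 1, 2, 0, 1], [1, 0, 2, 1, 2, 0]), ([1, 0, 2, 0, 1, 2], [2, 1, 0, 2, 0, 1]), ([1, 0, 2, 1, 2, 0], [0, 2, 1, 2, 0, 1]), ([1, 2, 0, 1, 0, 2], [2, 0, 1, 0, 2, 1]), ([1, 2, 0, 2, 1, 0], [0, 1, 2, 0, 2, 1]), ([2, 0, 1, 0, 2, 1], [1, 2, 0, 1, 0, 2]), ([2, 0, 1, 2, 1, 0], [0, 1, 2, 1, 0, 2]), ([2, 1, 0, 1, 2, 0], [0, 2, 1, 0, 1, 2]), ([2, 1, 0, 2, 0, 1], [1, 0, 2, 0, 1, 2])]"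

lemma win1: "list_all (\<lambda>s. list_all (\<lambda>p. (p, s) \<in> set V12) (tree s 6)) (gen 6)"
  by code_simp

lemma win2: "list_all (\<lambda>a. take 2 (fst a) \<noteq> [0,1] \<or> list_all (\<lambda>b. \<not> comp a b \<or> \<not> comp b a
   \<or> (a = A1 \<and> b = A1) \<or> (a = A2 \<and> b = A2)) V12) V12"
  by code_simp

lemma factor_sf:
  assumes "square_free (a @ b)"
  shows "square_free (drop m a @ take k b)"
proof -
  have "a @ b = take m a @ (drop m a @ take k b) @ drop k b" by simp
  with assms have "square_free (take m a @ ((drop m a @ take k b) @ drop k b))" by simp
  then have "square_free ((drop m a @ take k b) @ drop k b)" by (rule square_free_appendD)
  then show ?thesis by (rule square_free_appendD)
qed

lemma bt_cond:
  assumes "brinkhuis_triple n B k0 k1 k2" "[i,j,l] \<in> sqf_words 3" "u\<in>B i" "v\<in>B j" "x\<in>B l"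
  shows "square_free (u@v@x)"
proof -
  have "\<forall>i i' i''. [i, i', i''] \<in> sqf_words 3 \<longrightarrow>
        (\<forall>u\<in>B i. \<forall>v\<in>B i'. \<forall>x\<in>B i''. square_free (u @ v @ x))"
    using assms(1) unfolding brinkhuis_triple_def by (elim conjE)
  then show ?thesis using assms(2-5) by blast
qed

lemma sp_bt: "special_brinkhuis_triple n B k \<Longrightarrow> brinkhuis_triple n B k k k"
  unfolding special_brinkhuis_triple_def by (elim conjE)

lemma sp_rev: "special_brinkhuis_triple n B k \<Longrightarrow> w \<in> B 0 \<Longrightarrow> rev w \<in> B 0"
  unfolding special_brinkhuis_triple_def by (elim conjE) blast

lemma sp_B1: "special_brinkhuis_triple n B k \<Longrightarrow> B 1 = tau ` B 0"
  unfolding special_brinkhuis_triple_def by (elim conjE)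

lemma sp_B2: "special_brinkhuis_triple n B k \<Longrightarrow> B 2 = (tau \<circ> tau) ` B 0"
  unfolding special_brinkhuis_triple_def by (elim conjE)

lemma sp_sqf: "special_brinkhuis_triple n B k \<Longrightarrow> w \<in> B 0 \<Longrightarrow> w \<in> sqf_words n"
proof -
  assume a: "special_brinkhuis_triple n B k" "w \<in> B 0"
  have "\<forall>i\<in>{0,1,2}. B i \<subseteq> sqf_words n" using sp_bt[OF a(1)] unfolding brinkhuis_triple_def by (elim conjE)
  then show ?thesis using a(2) by blast
qed

lemma sp_word3: "special_brinkhuis_triple n B k \<Longrightarrow> w \<in> B 0 \<Longrightarrow> word3 w"
  using sp_sqf unfolding sqf_words_def by blast

lemma Bl_mem:
  assumes sp: "special_brinkhuis_triple n B k" and S: "set S \<subseteq> B 0" and i: "i < 3"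
    and x: "x \<in> set (Bl S i)"
  shows "x \<in> B i"
proof -
  consider "i = 0" | "i = 1" | "i = 2" using i by linarith
  then show ?thesis
  proof cases
    case 1
    then show ?thesis using x S unfolding Bl_def by auto
  next
    case 2
    then obtain y where y: "y \<in> set S" "x = map t1 y" using x unfolding Bl_def by auto
    then have "y \<in> B 0" using S by blast
    then have "x = tau y" using y map_t1 sp_word3[OF sp] by blast
    then show ?thesis using \<open>y \<in> B 0\<close> sp_B1[OF sp] 2 by blast
  next
    case 3
    then obtain y where y: "y \<in> set S" "x = map t2 y" using x unfolding Bl_def by auto
    then have "y \<in> B 0" using S by blast
    then have "x = (tau \<circ> tau) y" using y map_t2 sp_word3[OF sp] by blast
    then show ?thesis using \<open>y \<in> B 0\<close> sp_B2[OF sp] 3 by blast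
  qed
qed

lemma trips_sqf: "(i,j,l) \<in> set trips \<Longrightarrow> [i,j,l] \<in> sqf_words 3 \<and> i < 3 \<and> j < 3 \<and> l < 3"
  unfolding trips_def
  by (simp, elim disjE, simp_all add: sqf_words_def word3_def sqf2_correct[symmetric])

lemma okw_sound:
  assumes sp: "special_brinkhuis_triple n B k" and w: "w \<in> B 0"
  shows "okw w"
proof -
  have S: "set [w, rev w] \<subseteq> B 0" using w sp_rev[OF sp w] by simp
  have "\<forall>t\<in>set trips. (\<lambda>(i,j,l). list_all (\<lambda>u. list_all (\<lambda>v. list_all (\<lambda>x. sqf2 (u @ v @ x))
        (Bl [w, rev w] l)) (Bl [w, rev w] j)) (Bl [w, rev w] i)) t"
  proof
    fix t assume t: "t \<in> set trips"
    obtain i j l where tt: "t = (i,j,l)" by (cases t) blast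
    have T: "[i,j,l] \<in> sqf_words 3" "i < 3" "j < 3" "l < 3" using trips_sqf t tt by blast+
    have "list_all (\<lambda>u. list_all (\<lambda>v. list_all (\<lambda>x. sqf2 (u @ v @ x))
        (Bl [w, rev w] l)) (Bl [w, rev w] j)) (Bl [w, rev w] i)"
      unfolding list_all_iff
    proof (intro ballI)
      fix u v x assume "u \<in> set (Bl [w, rev w] i)" "v \<in> set (Bl [w, rev w] j)"
        "x \<in> set (Bl [w, rev w] l)"
      then have "u \<in> B i" "v \<in> B j" "x \<in> B l" using Bl_mem[OF sp S] T by blast+
      then show "sqf2 (u @ v @ x)"
        using bt_cond[OF sp_bt[OF sp] T(1)] by (simp add: sqf2_correct)
    qed
    then show "(\<lambda>(i,j,l). list_all (\<lambda>u. list_all (\<lambda>v. list_all (\<lambda>x. sqf2 (u @ v @ x))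
        (Bl [w, rev w] l)) (Bl [w, rev w] j)) (Bl [w, rev w] i)) t"
      using tt by simp
  qed
  then show ?thesis unfolding okw_def Let_def list_all_iff[of _ trips] .
qed

lemma sqf_take: "w \<in> sqf_words n \<Longrightarrow> square_free (take m w)"
proof -
  assume "w \<in> sqf_words n"
  then have "square_free (take m w @ drop m w)" by (simp add: sqf_words_def)
  then show ?thesis by (rule square_free_appendD(1))
qed

lemma sqf_drop: "w \<in> sqf_words n \<Longrightarrow> square_free (drop m w)"
proof -
  assume "w \<in> sqf_words n"
  then have "square_free (take m w @ drop m w)" by (simp add: sqf_words_def)
  then show ?thesis by (rule square_free_appendD(2))
qed

lemma word3_take: "w \<in> sqf_words n \<Longrightarrow> word3 (take m w)"
proof -
  assume "w \<in> sqf_words n"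
  then have "set w \<subseteq> {0,1,2}" by (simp add: sqf_words_def word3_def)
  moreover have "set (take m w) \<subseteq> set w" by (rule set_take_subset)
  ultimately show ?thesis unfolding word3_def by (rule subset_trans[rotated])
qed

lemma word3_drop: "w \<in> sqf_words n \<Longrightarrow> word3 (drop m w)"
proof -
  assume "w \<in> sqf_words n"
  then have "set w \<subseteq> {0,1,2}" by (simp add: sqf_words_def word3_def)
  moreover have "set (drop m w) \<subseteq> set w" by (rule set_drop_subset)
  ultimately show ?thesis unfolding word3_def by (rule subset_trans[rotated])
qed

lemma comp_sound:
  assumes sp: "special_brinkhuis_triple n B k" and u: "u \<in> B 0" and v: "v \<in> B 0"
  shows "comp (pr u) (pr v)"
proof -
  have w3: "word3 (take 6 v)" using word3_take sp_sqf[OF sp v] .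
  have "tau v \<in> tau ` B 0" using v by (rule imageI)
  then have tv: "tau v \<in> B 1" using sp_B1[OF sp] by simp
  have "(tau \<circ> tau) v \<in> (tau \<circ> tau) ` B 0" using v by (rule imageI)
  then have ttv: "(tau \<circ> tau) v \<in> B 2" using sp_B2[OF sp] by simp
  have s1: "[0,1,0] \<in> sqf_words 3" "[0,2,0] \<in> sqf_words 3"
    by (simp_all add: sqf_words_def word3_def sqf2_correct[symmetric])
  have "square_free (u @ tau v @ u)" using bt_cond[OF sp_bt[OF sp] s1(1) u tv u] .
  then have "square_free (u @ tau v)"
    using square_free_appendD(1)[of "u @ tau v" u] by simp
  then have "square_free (drop (length u - 6) u @ take 6 (tau v))" by (rule factor_sf)
  moreover have "take 6 (tau v) = map t1 (take 6 v)" using map_t1[OF w3] by (simp add: tau_def take_map)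
  ultimately have 1: "sqf2 (drop (length u - 6) u @ map t1 (take 6 v))" by (simp add: sqf2_correct)
  have "square_free (u @ (tau \<circ> tau) v @ u)" using bt_cond[OF sp_bt[OF sp] s1(2) u ttv u] .
  then have "square_free (u @ (tau \<circ> tau) v)"
    using square_free_appendD(1)[of "u @ (tau \<circ> tau) v" u] by simp
  then have "square_free (drop (length u - 6) u @ take 6 ((tau \<circ> tau) v))" by (rule factor_sf)
  moreover have "take 6 ((tau \<circ> tau) v) = map t2 (take 6 v)" using map_t2[OF w3] by (simp add: tau_def take_map)
  ultimately have 2: "sqf2 (drop (length u - 6) u @ map t2 (take 6 v))" by (simp add: sqf2_correct)
  show ?thesis using 1 2 unfolding comp_def okp_def pr_def by simp
qed

lemma pr_V12:
  assumes sp: "special_brinkhuis_triple n B k" and u: "u \<in> B 0" and n: "n \<ge> 6"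
  shows "pr u \<in> set V12"
proof -
  have us: "u \<in> sqf_words n" using sp_sqf[OF sp u] .
  have len: "length u = n" using us unfolding sqf_words_def by auto
  let ?s = "drop (length u - 6) u" and ?p = "take 6 u"
  have "?s @ [] \<in> set ((ext ^^ length ?s) [[]])"
    using ext_complete[of ?s "[]" "[[]]"] word3_drop[OF us] sqf_drop[OF us] by simp
  moreover have "length ?s = 6" using len n by simp
  ultimately have s: "?s \<in> set (gen 6)" by (simp add: gen_eq)
  have "okp ?s ?p" using comp_sound[OF sp u u] unfolding comp_def pr_def by simp
  then have "?p \<in> set (tree ?s (length ?p))" using tree_complete word3_take[OF us] by blast
  moreover have "length ?p = 6" using len n by simp
  ultimately have "?p \<in> set (tree ?s 6)" by simp
  with s win1 show ?thesis unfolding pr_def list_all_iff by blast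
qed

theorem proposition1:
  fixes n k :: nat and B :: "nat \<Rightarrow> nat list set"
  assumes "n > 1" and "k \<ge> 1"
    and "special_brinkhuis_triple n B k"
    and "\<exists>w\<in>B 0. take 2 w = [0, 1]"
  shows "n \<ge> 13 \<and>
    ((\<forall>w\<in>B 0. take 6 w = [0,1,2,0,2,1] \<and> drop (length w - 6) w = [1,2,0,2,1,0])
     \<noteq>
     (\<forall>w\<in>B 0. take 6 w = [0,1,2,1,0,2] \<and> drop (length w - 6) w = [2,0,1,2,1,0]))"
proof -
  note sp = assms(3)
  obtain w0 where w0: "w0 \<in> B 0" "take 2 w0 = [0,1]" using assms(4) by blast
  have n13: "n \<ge> 13"
  proof (rule ccontr)
    assume "\<not> 13 \<le> n"
    then have nr: "n - 2 \<le> 10" by simp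
    have rw: "rev w0 \<in> B 0" using sp_rev[OF sp w0(1)] .
    have ws: "rev w0 \<in> sqf_words n" using sp_sqf[OF sp rw] .
    have len: "length w0 = n" using sp_sqf[OF sp w0(1)] unfolding sqf_words_def by auto
    have "w0 = take 2 w0 @ drop 2 w0" by simp
    then have e: "w0 = [0,1] @ drop 2 w0" using w0(2) by simp
    have "rev w0 = rev ([0,1] @ drop 2 w0)" using e by (rule arg_cong)
    also have "\<dots> = rev (drop 2 w0) @ [1,0]" by simp
    finally have r: "rev w0 = rev (drop 2 w0) @ [1,0]" .
    have ws3: "word3 (rev w0)" "square_free (rev w0)" using ws unfolding sqf_words_def by auto
    have "set (rev (drop 2 w0)) \<subseteq> set (rev w0)" unfolding r by auto
    then have "word3 (rev (drop 2 w0))" using ws3(1) unfolding word3_def by (rule subset_trans)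
    moreover have "square_free (rev (drop 2 w0) @ [1,0])" using ws3(2) unfolding r .
    ultimately have "rev (drop 2 w0) @ [1,0] \<in> set ((ext ^^ length (rev (drop 2 w0))) [[1,0]])"
      using ext_complete[of "rev (drop 2 w0)" "[1,0]" "[[1,0]]"] by simp
    moreover have "length (rev (drop 2 w0)) = n - 2" using len by simp
    ultimately have "rev (drop 2 w0) @ [1,0] \<in> set (genE (n - 2))" by (simp add: genE_eq)
    then have "rev w0 \<in> set (genE (n - 2))" unfolding r .
    then have "\<not> okw (rev w0)" using small_check[OF nr] unfolding list_all_iff by blast
    with okw_sound[OF sp rw] show False by blast
  qed
  have V: "\<And>u. u \<in> B 0 \<Longrightarrow> pr u \<in> set V12" using pr_V12[OF sp] n13 by simp
  have t2: "take 2 (fst (pr w0)) = [0,1]" using w0(2) unfolding pr_def by simp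
  have W: "\<forall>a\<in>set V12. take 2 (fst a) \<noteq> [0,1] \<or> (\<forall>b\<in>set V12. \<not> comp a b \<or> \<not> comp b a
   \<or> (a = A1 \<and> b = A1) \<or> (a = A2 \<and> b = A2))" using win2 unfolding list_all_iff .
  have W0: "\<forall>b\<in>set V12. \<not> comp (pr w0) b \<or> \<not> comp b (pr w0)
   \<or> (pr w0 = A1 \<and> b = A1) \<or> (pr w0 = A2 \<and> b = A2)"
    using bspec[OF W V[OF w0(1)]] t2 by simp
  have key: "\<And>u. u \<in> B 0 \<Longrightarrow> (pr w0 = A1 \<and> pr u = A1) \<or> (pr w0 = A2 \<and> pr u = A2)"
  proof -
    fix u assume u: "u \<in> B 0"
    have c: "comp (pr w0) (pr u)" "comp (pr u) (pr w0)"
      using comp_sound[OF sp w0(1) u] comp_sound[OF sp u w0(1)] by -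
    have "\<not> comp (pr w0) (pr u) \<or> \<not> comp (pr u) (pr w0)
      \<or> (pr w0 = A1 \<and> pr u = A1) \<or> (pr w0 = A2 \<and> pr u = A2)" using bspec[OF W0 V[OF u]] .
    with c show "(pr w0 = A1 \<and> pr u = A1) \<or> (pr w0 = A2 \<and> pr u = A2)" by simp
  qed
  have prd1: "\<And>u. pr u = A1 \<Longrightarrow> take 6 u = [0,1,2,0,2,1] \<and> drop (length u - 6) u = [1,2,0,2,1,0]"
    unfolding pr_def A1_def by simp
  have prd2: "\<And>u. pr u = A2 \<Longrightarrow> take 6 u = [0,1,2,1,0,2] \<and> drop (length u - 6) u = [2,0,1,2,1,0]"
    unfolding pr_def A2_def by simp
  have nA1: "\<not> (take 6 w0 = [0,1,2,0,2,1])" if "pr w0 = A2"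
    using that unfolding pr_def A2_def by simp
  have nA2: "\<not> (take 6 w0 = [0,1,2,1,0,2])" if "pr w0 = A1"
    using that unfolding pr_def A1_def by simp
  from key[OF w0(1)] have "pr w0 = A1 \<or> pr w0 = A2" by blast
  then show ?thesis
  proof
    assume h: "pr w0 = A1"
    have all: "\<forall>w\<in>B 0. take 6 w = [0,1,2,0,2,1] \<and> drop (length w - 6) w = [1,2,0,2,1,0]"
    proof
      fix w assume "w \<in> B 0"
      then have "pr w = A1" using key[of w] h unfolding A1_def A2_def by auto
      then show "take 6 w = [0,1,2,0,2,1] \<and> drop (length w - 6) w = [1,2,0,2,1,0]" by (rule prd1)
    qed
    have "\<not> (\<forall>w\<in>B 0. take 6 w = [0,1,2,1,0,2] \<and> drop (length w - 6) w = [2,0,1,2,1,0])"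
      using nA2[OF h] w0(1) by blast
    with all n13 show ?thesis by blast
  next
    assume h: "pr w0 = A2"
    have all: "\<forall>w\<in>B 0. take 6 w = [0,1,2,1,0,2] \<and> drop (length w - 6) w = [2,0,1,2,1,0]"
    proof
      fix w assume "w \<in> B 0"
      then have "pr w = A2" using key[of w] h unfolding A1_def A2_def by auto
      then show "take 6 w = [0,1,2,1,0,2] \<and> drop (length w - 6) w = [2,0,1,2,1,0]" by (rule prd2)
    qed
    have "\<not> (\<forall>w\<in>B 0. take 6 w = [0,1,2,0,2,1] \<and> drop (length w - 6) w = [1,2,0,2,1,0])"
      using nA1[OF h] w0(1) by blast
    with all n13 show ?thesis by blast
  qed
qed

end
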